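(* Let $A\in P(n)$ and $B\in P(m)$, and let $A\otimes B\in P(nm)$ be the Kronecker product, i.e. the block matrix whose $(i,j)$ block is $A_{ij}B$. Then $I(A\otimes B)=I(A)\,I(B)$.
   Context: $P(k)$ denotes the positive semidefinite complex $k\times k$ matrices. For $C\in P(k)$, let $P_k$ be the $k\times k$ matrix with all entries equal to $1$; the minimal index is $I(C)=\max\{\lambda\ge 0: C-\lambda P_k\ge 0\}$. *)

theory Defs
  imports "HOL-Analysis.Analysis"
begin

text \<open>Square complex matrices indexed by a finite type 'n (so k = CARD('n)).\<close>

definition hermitian :: "complex^'n^'n \<Rightarrow> bool" where
  "hermitian C \<longleftrightarrow> (\<forall>i j. C$i$j = cnj (C$j$i))"

definition qform :: "complex^'n^'n \<Rightarrow> complex^'n \<Rightarrow> complex" where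
  "qform C x = (\<Sum>i\<in>UNIV. \<Sum>j\<in>UNIV. cnj (x$i) * C$i$j * x$j)"

definition psd :: "complex^'n^'n \<Rightarrow> bool" where
  "psd C \<longleftrightarrow> hermitian C \<and> (\<forall>x. Im (qform C x) = 0 \<and> Re (qform C x) \<ge> 0)"

definition ones_mat :: "complex^'n^'n" where
  "ones_mat = (\<chi> i j. 1)"

definition min_index :: "complex^'n^'n \<Rightarrow> real" where
  "min_index C = Sup {t::real. t \<ge> 0 \<and> psd (C - t *\<^sub>R ones_mat)}"

definition kron :: "complex^'n^'n \<Rightarrow> complex^'m^'m \<Rightarrow> complex^('n \<times> 'm)^('n \<times> 'm)" where
  "kron A B = (\<chi> p q. A$(fst p)$(fst q) * B$(snd p)$(snd q))"

end

theory Submission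
  imports Defs
begin


definition nn :: "complex \<Rightarrow> bool" where "nn z \<longleftrightarrow> Im z = 0 \<and> Re z \<ge> 0"
definition qf :: "'a set \<Rightarrow> ('a \<Rightarrow> 'a \<Rightarrow> complex) \<Rightarrow> ('a \<Rightarrow> complex) \<Rightarrow> complex" where
  "qf S B x = (\<Sum>i\<in>S. \<Sum>j\<in>S. cnj (x i) * B i j * x j)"
definition psdS :: "'a set \<Rightarrow> ('a \<Rightarrow> 'a \<Rightarrow> complex) \<Rightarrow> bool" where
  "psdS S B \<longleftrightarrow> (\<forall>i\<in>S. \<forall>j\<in>S. B i j = cnj (B j i)) \<and> (\<forall>x. nn (qf S B x))"

lemma nn_sum: "(\<And>i. i \<in> S \<Longrightarrow> nn (f i)) \<Longrightarrow> nn (sum f S)"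
  unfolding nn_def by (auto intro: sum_nonneg)

lemma qf_supp:
  assumes "finite S" "T \<subseteq> S" "\<And>i. i \<in> S - T \<Longrightarrow> x i = 0"
  shows "qf S B x = qf T B x"
proof -
  have "(\<Sum>j\<in>S. cnj (x i) * B i j * x j) = (\<Sum>j\<in>T. cnj (x i) * B i j * x j)" for i
    by (rule sum.mono_neutral_right) (use assms in auto)
  then have "qf S B x = (\<Sum>i\<in>S. \<Sum>j\<in>T. cnj (x i) * B i j * x j)" unfolding qf_def by simp
  also have "\<dots> = (\<Sum>i\<in>T. \<Sum>j\<in>T. cnj (x i) * B i j * x j)"
    by (rule sum.mono_neutral_right) (use assms in auto)
  finally show ?thesis unfolding qf_def .
qed

lemma sum_if_out: "(\<Sum>j\<in>S. if P then f j else 0) = (if P then (\<Sum>j\<in>S. f j) else 0)"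
  by simp

lemma qf_pert:
  assumes "finite S" "p \<in> S"
  shows "qf S B (\<lambda>i. x i + (if i = p then c else 0)) = qf S B x + cnj c * (\<Sum>j\<in>S. B p j * x j)
     + c * (\<Sum>i\<in>S. cnj (x i) * B i p) + cnj c * B p p * c"
proof -
  have "qf S B (\<lambda>i. x i + (if i = p then c else 0)) = (\<Sum>i\<in>S. \<Sum>j\<in>S. cnj (x i) * B i j * x j
     + (if j = p then cnj (x i) * B i p * c else 0) + (if i = p then cnj c * B p j * x j else 0)
     + (if i = p then (if j = p then cnj c * B p p * c else 0) else 0))"
    unfolding qf_def by (intro sum.cong refl) (auto simp: algebra_simps)
  also have "\<dots> = qf S B x + (\<Sum>i\<in>S. cnj (x i) * B i p * c) + (\<Sum>j\<in>S. cnj c * B p j * x j)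
     + cnj c * B p p * c"
    using assms by (simp add: sum.distrib qf_def sum.delta sum_if_out)
  finally show ?thesis by (simp add: sum_distrib_left sum_distrib_right algebra_simps)
qed

lemma step:
  assumes "finite S" "p \<in> S" "psdS S B"
  shows "\<exists>v B'. (\<forall>k\<in>S. \<forall>l\<in>S. B k l = B' k l + v k * cnj (v l)) \<and> psdS S B'
     \<and> (\<forall>l\<in>S. B' p l = 0 \<and> B' l p = 0)"
proof -
  have herm: "\<And>i j. i\<in>S \<Longrightarrow> j\<in>S \<Longrightarrow> B i j = cnj (B j i)" using assms(3) unfolding psdS_def by blast
  have psd: "\<And>x. nn (qf S B x)" using assms(3) by (auto simp: psdS_def)
  have "qf S B (\<lambda>i. if i = p then 1 else 0) = qf {p} B (\<lambda>i. if i = p then 1 else 0)"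
    by (rule qf_supp) (use assms in auto)
  also have "\<dots> = B p p" by (simp add: qf_def)
  finally have dnn: "nn (B p p)" using psd by metis
  show ?thesis
  proof (cases "B p p = 0")
    case True
    have zero: "B p j = 0" if "j \<in> S" for j
    proof (rule ccontr)
      assume ne: "B p j \<noteq> 0"
      then have jp: "j \<noteq> p" using True by auto
      define \<beta> where "\<beta> = B p j"
      have bpos: "(cmod \<beta>)^2 > 0" using ne \<beta>_def by simp
      define t where "t = (Re (B j j) + 1) / (2 * (cmod \<beta>)^2)"
      define x where "x = (\<lambda>i. if i = p then - (of_real t * \<beta>) else if i = j then 1 else (0::complex))"
      have "qf S B x = qf {p,j} B x"
        by (rule qf_supp) (use assms that in \<open>auto simp: x_def\<close>)
      also have "\<dots> = B j j - 2 * of_real t * (\<beta> * cnj \<beta>)"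
        using jp True herm[of j p] assms that by (simp add: qf_def x_def \<beta>_def algebra_simps)
      also have "\<dots> = B j j - 2 * of_real t * of_real ((cmod \<beta>)^2)"
        by (simp only: complex_norm_square)
      finally have "Re (qf S B x) = Re (B j j) - 2 * t * (cmod \<beta>)^2" by simp
      also have "\<dots> = -1"
      proof -
        have "2 * t * (cmod \<beta>)^2 = Re (B j j) + 1" using bpos unfolding t_def by simp
        then show ?thesis by linarith
      qed
      finally show False using psd[of x] by (simp add: nn_def)
    qed
    show ?thesis
    proof (rule exI[of _ "\<lambda>_. 0"], rule exI[of _ B], intro conjI ballI)
      fix l assume l: "l \<in> S"
      show "B p l = 0" using zero l .
      show "B l p = 0" using zero[OF l] herm[OF l assms(2)] by simp
    qed (use assms(3) in simp_all)
  next
    case False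
    then have dpos: "Re (B p p) > 0" and dreal: "B p p = of_real (Re (B p p))"
      using dnn by (auto simp: nn_def complex_eq_iff)
    define s where "s = sqrt (Re (B p p))"
    have spos: "s > 0" using dpos s_def by simp
    have ss: "complex_of_real s * complex_of_real s = B p p"
    proof -
      have "s * s = Re (B p p)" using dpos s_def by simp
      then have "complex_of_real s * complex_of_real s = of_real (Re (B p p))"
        by (metis of_real_mult)
      then show ?thesis using dreal by simp
    qed
    define v where "v k = B k p / of_real s" for k
    define B' where "B' k l = B k l - v k * cnj (v l)" for k l
    have cs: "cnj (complex_of_real s) = complex_of_real s" by simp
    have cd: "cnj (B p p) = B p p" using dreal by (metis complex_cnj_complex_of_real)
    show ?thesis
    proof (intro exI conjI ballI)
      show "B k l = B' k l + v k * cnj (v l)" for k l by (simp add: B'_def)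
    next
      fix l assume l: "l \<in> S"
      show "B' p l = 0" unfolding B'_def v_def using herm[OF l assms(2)] ss spos False
        by (simp add: field_simps)
      show "B' l p = 0" unfolding B'_def v_def using ss spos cs cd False
        by (simp add: field_simps)
    next
      show "psdS S B'" unfolding psdS_def
      proof (intro conjI ballI allI)
        show "B' i j = cnj (B' j i)" if "i \<in> S" "j \<in> S" for i j
          using herm[OF that] by (simp add: B'_def)
      next
        fix x
        define u where "u = (\<Sum>l\<in>S. B p l * x l)"
        define c where "c = - (u / B p p)"
        have cu: "(\<Sum>i\<in>S. cnj (x i) * B i p) = cnj u"
          unfolding u_def by (auto intro!: sum.cong simp: herm[OF _ assms(2)])
        have cc: "cnj c = - (cnj u / B p p)" unfolding c_def using dreal
          by (metis complex_cnj_complex_of_real complex_cnj_divide complex_cnj_minus)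
        have qy: "qf S B (\<lambda>i. x i + (if i = p then c else 0)) = qf S B x - u * cnj u / B p p"
          unfolding qf_pert[OF assms(1,2)] cu u_def[symmetric] cc using False
          by (simp add: c_def field_simps)
        have q': "qf S B' x = qf S B x - (\<Sum>i\<in>S. cnj (x i) * v i) * (\<Sum>j\<in>S. cnj (v j) * x j)"
        proof -
          have "qf S B' x = (\<Sum>i\<in>S. \<Sum>j\<in>S. cnj (x i) * B i j * x j - (cnj (x i) * v i) * (cnj (v j) * x j))"
            unfolding qf_def B'_def by (intro sum.cong refl) (simp add: algebra_simps)
          also have "\<dots> = qf S B x - (\<Sum>i\<in>S. \<Sum>j\<in>S. (cnj (x i) * v i) * (cnj (v j) * x j))"
            unfolding qf_def by (simp add: sum_subtractf)
          finally show ?thesis by (simp add: sum_product)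
        qed
        have s1: "(\<Sum>i\<in>S. cnj (x i) * v i) = cnj u / of_real s"
          unfolding v_def cu[symmetric] by (simp add: sum_divide_distrib)
        have s2: "(\<Sum>j\<in>S. cnj (v j) * x j) = u / of_real s"
          unfolding v_def u_def sum_divide_distrib
          by (intro sum.cong refl) (simp add: herm[OF assms(2)])
        have "qf S B' x = qf S B (\<lambda>i. x i + (if i = p then c else 0))"
          unfolding q' qy s1 s2 ss[symmetric] by (simp add: field_simps)
        then show "nn (qf S B' x)" using psd by simp
      qed
    qed
  qed
qed





lemma gram:
  assumes "finite S" "psdS S B"
  shows "\<exists>W. \<forall>k\<in>S. \<forall>l\<in>S. B k l = (\<Sum>r\<in>S. W r k * cnj (W r l))"
  using assms
proof (induction S arbitrary: B rule: finite_induct)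
  case empty then show ?case by simp
next
  case (insert p F)
  obtain v B' where dec: "\<forall>k\<in>insert p F. \<forall>l\<in>insert p F. B k l = B' k l + v k * cnj (v l)"
    and ps: "psdS (insert p F) B'" and z: "\<forall>l\<in>insert p F. B' p l = 0 \<and> B' l p = 0"
    using step[OF _ _ insert.prems] insert.hyps by blast
  have "psdS F B'"
    unfolding psdS_def
  proof (intro conjI ballI allI)
    show "B' i j = cnj (B' j i)" if "i\<in>F" "j\<in>F" for i j using ps that unfolding psdS_def by blast
  next
    fix x
    have "qf (insert p F) B' x = qf F B' x"
    proof -
      have "qf (insert p F) B' x = (\<Sum>i\<in>insert p F. \<Sum>j\<in>insert p F. cnj (x i) * B' i j * x j)"
        by (simp add: qf_def)
      also have "\<dots> = (\<Sum>i\<in>F. \<Sum>j\<in>insert p F. cnj (x i) * B' i j * x j)"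
        using insert.hyps z by (simp add: sum.insert)
      also have "\<dots> = (\<Sum>i\<in>F. \<Sum>j\<in>F. cnj (x i) * B' i j * x j)"
        using insert.hyps z by (intro sum.cong[OF refl]) (simp add: sum.insert)
      finally show ?thesis by (simp add: qf_def)
    qed
    then show "nn (qf F B' x)" using ps unfolding psdS_def by metis
  qed
  then obtain W' where W': "\<forall>k\<in>F. \<forall>l\<in>F. B' k l = (\<Sum>r\<in>F. W' r k * cnj (W' r l))"
    using insert.IH by blast
  define W where "W r k = (if r = p then v k else if k = p then 0 else W' r k)" for r k
  show ?case
  proof (intro exI ballI)
    fix k l assume k: "k \<in> insert p F" and l: "l \<in> insert p F"
    have sumW: "(\<Sum>r\<in>insert p F. W r k * cnj (W r l)) = v k * cnj (v l) + (\<Sum>r\<in>F. W r k * cnj (W r l))"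
      using insert.hyps by (simp add: W_def)
    show "B k l = (\<Sum>r\<in>insert p F. W r k * cnj (W r l))"
    proof (cases "k = p \<or> l = p")
      case True
      then have "(\<Sum>r\<in>F. W r k * cnj (W r l)) = 0" using insert.hyps
        by (intro sum.neutral) (auto simp: W_def)
      moreover have "B' k l = 0" using True z k l by auto
      ultimately show ?thesis using dec[rule_format, OF k l] sumW by simp
    next
      case False
      then have kF: "k \<in> F" and lF: "l \<in> F" using k l by auto
      have "(\<Sum>r\<in>F. W r k * cnj (W r l)) = (\<Sum>r\<in>F. W' r k * cnj (W' r l))"
        using False insert.hyps by (intro sum.cong refl) (auto simp: W_def)
      also have "\<dots> = B' k l" using W' kF lF by simp
      finally show ?thesis using dec[rule_format, OF k l] sumW by simp
    qed
  qed
qed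

lemma qform_qf: "qform C x = qf UNIV (\<lambda>i j. C$i$j) (\<lambda>i. x$i)"
  by (simp add: qform_def qf_def)

lemma psd_gram:
  fixes C :: "complex^'n^'n"
  assumes "psd C"
  shows "\<exists>W::'n \<Rightarrow> 'n \<Rightarrow> complex. \<forall>k l. C$k$l = (\<Sum>r\<in>UNIV. W r k * cnj (W r l))"
proof -
  have "psdS UNIV (\<lambda>i j. C$i$j)"
    unfolding psdS_def
  proof (intro conjI ballI allI)
    show "C$i$j = cnj (C$j$i)" for i j using assms unfolding psd_def hermitian_def by blast
    fix x :: "'n \<Rightarrow> complex"
    have "qf UNIV (\<lambda>i j. C$i$j) x = qform C (\<chi> i. x i)" by (simp add: qform_qf)
    then show "nn (qf UNIV (\<lambda>i j. C$i$j) x)" using assms by (simp add: psd_def nn_def)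
  qed
  from gram[OF finite_class.finite_UNIV this] show ?thesis by simp
qed

lemma sum_UNIV_pair: "(\<Sum>p\<in>(UNIV::('a::finite \<times> 'b::finite) set). f p) = (\<Sum>i\<in>UNIV. \<Sum>k\<in>UNIV. f (i,k))"
  by (simp add: sum.cartesian_product)

lemma prod3: "(\<Sum>k\<in>K. a k) * c * (\<Sum>l\<in>L. b l) = (\<Sum>k\<in>K. \<Sum>l\<in>L. a k * c * b l)" for c :: complex
proof -
  have "(\<Sum>k\<in>K. a k) * c = (\<Sum>k\<in>K. a k * c)" by (simp add: sum_distrib_right)
  then show ?thesis by (simp add: sum_product)
qed



lemma qform_kron_gram:
  fixes A :: "complex^'n^'n" and B :: "complex^'m^'m"
  assumes W: "\<And>k l. B$k$l = (\<Sum>r\<in>UNIV. W r k * cnj (W r l))"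
  shows "qform (kron A B) z = (\<Sum>r\<in>UNIV. qform A (\<chi> i. \<Sum>l\<in>UNIV. z$(i,l) * cnj (W r l)))"
proof -
  let ?G = "\<lambda>r i j k l. cnj (z$(i,k)) * W r k * A$i$j * (z$(j,l) * cnj (W r l))"
  have "(\<Sum>r\<in>UNIV. qform A (\<chi> i. \<Sum>l\<in>UNIV. z$(i,l) * cnj (W r l)))
      = (\<Sum>r\<in>UNIV. \<Sum>i\<in>UNIV. \<Sum>j\<in>UNIV. \<Sum>k\<in>UNIV. \<Sum>l\<in>UNIV. ?G r i j k l)"
    unfolding qform_def by (simp only: vec_lambda_beta cnj_sum complex_cnj_mult complex_cnj_cnj prod3)
  also have "\<dots> = (\<Sum>i\<in>UNIV. \<Sum>r\<in>UNIV. \<Sum>j\<in>UNIV. \<Sum>k\<in>UNIV. \<Sum>l\<in>UNIV. ?G r i j k l)"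
    by (rule sum.swap)
  also have "\<dots> = (\<Sum>i\<in>UNIV. \<Sum>j\<in>UNIV. \<Sum>r\<in>UNIV. \<Sum>k\<in>UNIV. \<Sum>l\<in>UNIV. ?G r i j k l)"
    by (rule sum.cong[OF refl], rule sum.swap)
  also have "\<dots> = (\<Sum>i\<in>UNIV. \<Sum>j\<in>UNIV. \<Sum>k\<in>UNIV. \<Sum>r\<in>UNIV. \<Sum>l\<in>UNIV. ?G r i j k l)"
    by (rule sum.cong[OF refl], rule sum.cong[OF refl], rule sum.swap)
  also have "\<dots> = (\<Sum>i\<in>UNIV. \<Sum>j\<in>UNIV. \<Sum>k\<in>UNIV. \<Sum>l\<in>UNIV. \<Sum>r\<in>UNIV. ?G r i j k l)"
    by (rule sum.cong[OF refl], rule sum.cong[OF refl], rule sum.cong[OF refl], rule sum.swap)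
  also have "\<dots> = (\<Sum>i\<in>UNIV. \<Sum>j\<in>UNIV. \<Sum>k\<in>UNIV. \<Sum>l\<in>UNIV. cnj (z$(i,k)) * A$i$j * B$k$l * z$(j,l))"
  proof -
    have "(\<Sum>r\<in>UNIV. ?G r i j k l) = cnj (z$(i,k)) * A$i$j * B$k$l * z$(j,l)" for i j k l
      unfolding W by (simp add: sum_distrib_left sum_distrib_right mult_ac)
    then show ?thesis by simp
  qed
  also have "\<dots> = (\<Sum>i\<in>UNIV. \<Sum>k\<in>UNIV. \<Sum>j\<in>UNIV. \<Sum>l\<in>UNIV. cnj (z$(i,k)) * A$i$j * B$k$l * z$(j,l))"
    by (rule sum.cong[OF refl], rule sum.swap)
  also have "\<dots> = qform (kron A B) z"
    unfolding qform_def kron_def sum_UNIV_pair by (simp add: mult.assoc)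
  finally show ?thesis by simp
qed


lemma psd_kron:
  fixes A :: "complex^'n^'n" and B :: "complex^'m^'m"
  assumes "psd A" "psd B"
  shows "psd (kron A B)"
proof -
  obtain W :: "'m \<Rightarrow> 'm \<Rightarrow> complex" where W: "\<And>k l. B$k$l = (\<Sum>r\<in>UNIV. W r k * cnj (W r l))"
    using psd_gram[OF assms(2)] by blast
  have hA: "\<And>i j. A$i$j = cnj (A$j$i)" and hB: "\<And>i j. B$i$j = cnj (B$j$i)"
    using assms unfolding psd_def hermitian_def by blast+
  have "hermitian (kron A B)" unfolding hermitian_def kron_def
  proof (intro allI)
    fix p q :: "'n \<times> 'm"
    show "(\<chi> p q. A $ fst p $ fst q * B $ snd p $ snd q) $ p $ q = cnj ((\<chi> p q. A $ fst p $ fst q * B $ snd p $ snd q) $ q $ p)"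
      using hA[of "fst p" "fst q"] hB[of "snd p" "snd q"] by simp
  qed
  moreover have "nn (qform (kron A B) z)" for z
    unfolding qform_kron_gram[OF W] using assms(1)
    by (intro nn_sum) (simp add: psd_def nn_def)
  ultimately show ?thesis by (simp add: psd_def nn_def)
qed



definition vsum :: "complex^'n \<Rightarrow> complex" where "vsum x = (\<Sum>i\<in>UNIV. x$i)"

lemma qform_ones: "qform ones_mat x = of_real ((cmod (vsum x))^2)"
proof -
  have "cnj (vsum x) * vsum x = qform ones_mat x"
    unfolding vsum_def qform_def ones_mat_def by (simp add: sum_product)
  moreover have "of_real ((cmod (vsum x))^2) = cnj (vsum x) * vsum x"
    by (subst complex_norm_square) (rule mult.commute)
  ultimately show ?thesis by simp
qed

lemma shift_entry: fixes C :: "complex^'n^'n" shows "(C - t *\<^sub>R ones_mat)$i$j = C$i$j - of_real t"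
proof -
  have "(t *\<^sub>R ones_mat :: complex^'n^'n)$i$j = t *\<^sub>R (1::complex)" by (simp add: ones_mat_def)
  then show ?thesis by (simp add: scaleR_conv_of_real)
qed

lemma qform_shift: "qform (C - t *\<^sub>R ones_mat) x = qform C x - of_real t * qform ones_mat x"
  unfolding qform_def shift_entry
  by (simp add: ones_mat_def algebra_simps sum_subtractf sum_distrib_left)

lemma psd_shift:
  assumes "psd C"
  shows "psd (C - t *\<^sub>R ones_mat) \<longleftrightarrow> (\<forall>x. t * (cmod (vsum x))^2 \<le> Re (qform C x))"
proof -
  have hC: "hermitian C" and qC: "\<And>x. Im (qform C x) = 0 \<and> Re (qform C x) \<ge> 0"
    using assms unfolding psd_def by blast+
  have "hermitian (C - t *\<^sub>R ones_mat)"
    unfolding hermitian_def shift_entry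
  proof (intro allI)
    fix i j
    have "C$i$j = cnj (C$j$i)" using hC unfolding hermitian_def by blast
    then show "C$i$j - of_real t = cnj (C$j$i - of_real t)" by simp
  qed
  moreover have "qform (C - t *\<^sub>R ones_mat) x = qform C x - of_real (t * (cmod (vsum x))^2)" for x
    unfolding qform_shift qform_ones by simp
  ultimately show ?thesis using qC unfolding psd_def by auto
qed

definition TT :: "complex^'n^'n \<Rightarrow> real set" where
  "TT C = {t. t \<ge> 0 \<and> (\<forall>x. t * (cmod (vsum x))^2 \<le> Re (qform C x))}"

lemma mi_TT: "psd C \<Longrightarrow> min_index C = Sup (TT C)"
proof -
  assume a: "psd C"
  have "{t. t \<ge> 0 \<and> psd (C - t *\<^sub>R ones_mat)} = TT C"
    unfolding TT_def using psd_shift[OF a] by blast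
  then show ?thesis unfolding min_index_def by simp
qed


lemma cm_one: "(cmod (vsum ((\<chi> i. 1) :: complex^'n)))^2 > 0"
  by (simp add: vsum_def)

lemma mi_props:
  fixes C :: "complex^'n^'n"
  assumes "psd C"
  shows "0 \<le> min_index C" "\<And>x. min_index C * (cmod (vsum x))^2 \<le> Re (qform C x)"
    "\<And>t. t \<ge> 0 \<Longrightarrow> (\<And>x. t * (cmod (vsum x))^2 \<le> Re (qform C x)) \<Longrightarrow> t \<le> min_index C"
proof -
  have qC: "\<And>x. Im (qform C x) = 0 \<and> Re (qform C x) \<ge> 0"
    using assms unfolding psd_def by blast+
  define e where "e = ((\<chi> i. 1) :: complex^'n)"
  have epos: "(cmod (vsum e))^2 > 0" unfolding e_def by (rule cm_one)
  have bdd: "bdd_above (TT C)"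
  proof (rule bdd_aboveI)
    fix t assume "t \<in> TT C"
    then have "t * (cmod (vsum e))^2 \<le> Re (qform C e)" unfolding TT_def by blast
    then show "t \<le> Re (qform C e) / (cmod (vsum e))^2" using epos by (simp add: field_simps)
  qed
  have zero: "0 \<in> TT C" unfolding TT_def using qC by simp
  show "0 \<le> min_index C" unfolding mi_TT[OF assms] using cSup_upper[OF zero bdd] .
  show "t \<le> min_index C" if "t \<ge> 0" "\<And>x. t * (cmod (vsum x))^2 \<le> Re (qform C x)" for t
    unfolding mi_TT[OF assms] using that by (intro cSup_upper[OF _ bdd]) (simp add: TT_def)
  show "min_index C * (cmod (vsum x))^2 \<le> Re (qform C x)" for x
  proof (cases "(cmod (vsum x))^2 = 0")
    case True then show ?thesis using qC by simp
  next
    case False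
    then have pos: "(cmod (vsum x))^2 > 0" by simp
    have "Sup (TT C) \<le> Re (qform C x) / (cmod (vsum x))^2"
    proof (rule cSup_least)
      show "TT C \<noteq> {}" using zero by blast
      fix t assume "t \<in> TT C"
      then have "t * (cmod (vsum x))^2 \<le> Re (qform C x)" unfolding TT_def by blast
      then show "t \<le> Re (qform C x) / (cmod (vsum x))^2" using pos by (simp add: field_simps)
    qed
    then show ?thesis unfolding mi_TT[OF assms] using pos by (simp add: field_simps)
  qed
qed



lemma psd_ones: "psd (ones_mat :: complex^'n^'n)"
  unfolding psd_def hermitian_def qform_ones by (simp add: ones_mat_def)

lemma kron_ones: "kron (ones_mat :: complex^'n^'n) (ones_mat :: complex^'m^'m) = ones_mat"
  by (simp add: kron_def ones_mat_def vec_eq_iff)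

lemma qform_lin3:
  assumes "\<And>p q. M$p$q = N1$p$q + c * N2$p$q + d * N3$p$q"
  shows "qform M z = qform N1 z + c * qform N2 z + d * qform N3 z"
proof -
  have "qform M z = (\<Sum>i\<in>UNIV. \<Sum>j\<in>UNIV. cnj (z$i) * N1$i$j * z$j + c * (cnj (z$i) * N2$i$j * z$j)
      + d * (cnj (z$i) * N3$i$j * z$j))"
    unfolding qform_def assms by (simp add: algebra_simps)
  also have "\<dots> = qform N1 z + c * qform N2 z + d * qform N3 z"
    unfolding qform_def by (simp add: sum.distrib sum_distrib_left)
  finally show ?thesis .
qed

lemma vsum_kron: fixes x :: "complex^'n" and y :: "complex^'m" shows "vsum ((\<chi> p. x$(fst p) * y$(snd p)) :: complex^('n \<times> 'm)) = vsum x * vsum y"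
  unfolding vsum_def sum_UNIV_pair by (simp add: sum_product)

lemma qform_kron_prod:
  fixes A :: "complex^'n^'n" and B :: "complex^'m^'m"
  shows "qform (kron A B) (\<chi> p. x$(fst p) * y$(snd p)) = qform A x * qform B y"
proof -
  have "qform A x * qform B y = (\<Sum>i\<in>UNIV. \<Sum>j\<in>UNIV. \<Sum>k\<in>UNIV. \<Sum>l\<in>UNIV.
      (cnj (x$i) * A$i$j * x$j) * (cnj (y$k) * B$k$l * y$l))"
    unfolding qform_def by (simp only: sum_distrib_right) (simp only: sum_distrib_left)
  also have "\<dots> = (\<Sum>i\<in>UNIV. \<Sum>k\<in>UNIV. \<Sum>j\<in>UNIV. \<Sum>l\<in>UNIV.
      (cnj (x$i) * A$i$j * x$j) * (cnj (y$k) * B$k$l * y$l))"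
    by (rule sum.cong[OF refl], rule sum.swap)
  also have "\<dots> = qform (kron A B) (\<chi> p. x$(fst p) * y$(snd p))"
    unfolding qform_def kron_def sum_UNIV_pair by (simp add: mult_ac)
  finally show ?thesis by simp
qed

theorem corollary2p3:
  fixes A :: "complex^'n^'n" and B :: "complex^'m^'m"
  assumes "psd A" and "psd B"
  shows "min_index (kron A B) = min_index A * min_index B"
proof -
  define a where "a = min_index A"
  define b where "b = min_index B"
  define c where "c = min_index (kron A B)"
  have pK: "psd (kron A B)" using psd_kron[OF assms] .
  note PA = mi_props[OF assms(1), folded a_def]
  note PB = mi_props[OF assms(2), folded b_def]
  note PK = mi_props[OF pK, folded c_def]
  have qA: "Im (qform A x) = 0" "Re (qform A x) \<ge> 0" for x using assms(1) unfolding psd_def by blast+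
  have qB: "Im (qform B x) = 0" "Re (qform B x) \<ge> 0" for x using assms(2) unfolding psd_def by blast+
  have ge: "a * b \<le> c"
  proof (rule PK(3))
    show "0 \<le> a * b" using PA(1) PB(1) by simp
    fix z :: "complex^('n \<times> 'm)"
    have psA': "psd (A - a *\<^sub>R ones_mat)" using psd_shift[OF assms(1)] PA(2) by blast
    have psB': "psd (B - b *\<^sub>R ones_mat)" using psd_shift[OF assms(2)] PB(2) by blast
    have p1: "psd (kron (A - a *\<^sub>R ones_mat) B)" by (rule psd_kron[OF psA' assms(2)])
    have p2: "psd (kron (ones_mat :: complex^'n^'n) (B - b *\<^sub>R ones_mat))" by (rule psd_kron[OF psd_ones psB'])
    have "qform (kron A B) z = qform (kron (A - a *\<^sub>R ones_mat) B) z
       + of_real a * qform (kron (ones_mat :: complex^'n^'n) (B - b *\<^sub>R ones_mat)) z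
       + of_real (a * b) * qform (kron (ones_mat :: complex^'n^'n) (ones_mat :: complex^'m^'m)) z"
      by (rule qform_lin3) (simp only: kron_def vec_lambda_beta shift_entry, simp add: ones_mat_def algebra_simps)
    also have "\<dots> = qform (kron (A - a *\<^sub>R ones_mat) B) z
       + of_real a * qform (kron (ones_mat :: complex^'n^'n) (B - b *\<^sub>R ones_mat)) z
       + of_real (a * b * (cmod (vsum z))^2)"
      unfolding kron_ones qform_ones by simp
    finally have "Re (qform (kron A B) z) = Re (qform (kron (A - a *\<^sub>R ones_mat) B) z)
       + a * Re (qform (kron (ones_mat :: complex^'n^'n) (B - b *\<^sub>R ones_mat)) z)
       + a * b * (cmod (vsum z))^2" by simp
    moreover have "Re (qform (kron (A - a *\<^sub>R ones_mat) B) z) \<ge> 0" using p1 unfolding psd_def by blast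
    moreover have "Re (qform (kron (ones_mat :: complex^'n^'n) (B - b *\<^sub>R ones_mat)) z) \<ge> 0"
      using p2 unfolding psd_def by blast
    ultimately show "a * b * (cmod (vsum z))^2 \<le> Re (qform (kron A B) z)"
      using PA(1) by (smt (verit) mult_nonneg_nonneg)
  qed
  have H: "c * (cmod (vsum x))^2 * (cmod (vsum y))^2 \<le> Re (qform A x) * Re (qform B y)" for x y
  proof -
    have "c * (cmod (vsum ((\<chi> p. x$(fst p) * y$(snd p)) :: complex^('n \<times> 'm))))^2
      \<le> Re (qform (kron A B) (\<chi> p. x$(fst p) * y$(snd p)))" by (rule PK(2))
    moreover have "Re (qform A x * qform B y) = Re (qform A x) * Re (qform B y)"
      using qA(1)[of x] qB(1)[of y] by simp
    ultimately show ?thesis using qA(1)[of x] unfolding vsum_kron qform_kron_prod by (simp add: norm_mult power_mult_distrib mult.assoc)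
  qed
  define eA where "eA = ((\<chi> i. 1) :: complex^'n)"
  define eB where "eB = ((\<chi> i. 1) :: complex^'m)"
  have eApos: "(cmod (vsum eA))^2 > 0" unfolding eA_def by (rule cm_one)
  have eBpos: "(cmod (vsum eB))^2 > 0" unfolding eB_def by (rule cm_one)
  have step1: "c * (cmod (vsum y))^2 \<le> a * Re (qform B y)" for y
  proof (cases "Re (qform B y) = 0")
    case True
    have "c * (cmod (vsum eA))^2 * (cmod (vsum y))^2 \<le> 0" using H[of eA y] True by simp
    then have "(cmod (vsum eA))^2 * (c * (cmod (vsum y))^2) \<le> 0" by (simp add: mult_ac)
    then have "c * (cmod (vsum y))^2 \<le> 0" using eApos by (simp add: mult_le_0_iff)
    then show ?thesis using True by simp
  next
    case False
    then have qpos: "Re (qform B y) > 0" using qB(2)[of y] by simp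
    have "c * (cmod (vsum y))^2 / Re (qform B y) \<le> a"
    proof (rule PA(3))
      show "0 \<le> c * (cmod (vsum y))^2 / Re (qform B y)" using PK(1) qpos by simp
      fix x
      have "c * (cmod (vsum x))^2 * (cmod (vsum y))^2 \<le> Re (qform A x) * Re (qform B y)" by (rule H)
      then show "c * (cmod (vsum y))^2 / Re (qform B y) * (cmod (vsum x))^2 \<le> Re (qform A x)"
        using qpos by (simp add: field_simps mult_ac)
    qed
    then show ?thesis using qpos by (simp add: field_simps)
  qed
  have le: "c \<le> a * b"
  proof (cases "a = 0")
    case True
    have "c * (cmod (vsum eB))^2 \<le> 0" using step1[of eB] True by simp
    then have "c \<le> 0" using eBpos by (simp add: mult_le_0_iff)
    then show ?thesis using True by simp
  next
    case False
    then have apos: "a > 0" using PA(1) by simp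
    have "c / a \<le> b"
    proof (rule PB(3))
      show "0 \<le> c / a" using PK(1) apos by simp
      fix y
      show "c / a * (cmod (vsum y))^2 \<le> Re (qform B y)" using step1[of y] apos
        by (simp add: field_simps mult_ac)
    qed
    then show ?thesis using apos by (simp add: field_simps mult_ac)
  qed
  show ?thesis using ge le unfolding a_def b_def c_def by simp
qed

end
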